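(* Let $(X_1,Y_1),\dots,(X_n,Y_n)$ be i.i.d. samples from a continuous joint density $f$ on $\mathbb{R}^2$, and let $\hat f_{n,\ell}$ be the partitioned sample-spacing density estimator defined below. Assume that as $n\to\infty$, $\ell(n)\to\infty$, $\ell(n)^2=o(n)$, $n_k\to\infty$, and $m_k=\lfloor\sqrt{n_k}+1/2\rfloor$. Then $$\lim_{n\to\infty}\int_{\mathbb{R}^2}\hat f_{n,\ell}(x,y)\,dx\,dy=1.$$
   Context: Partitioned estimator: for an integer $\ell=\ell(n)$, divide the range $[\min_v X_v,\max_v X_v]$ into $\ell$ equal-width intervals (width $(\max X-\min X)/\ell$) and likewise the range of the $Y_v$; the products give $\ell^2$ rectangles $P_1,\dots,P_{\ell^2}$. Let $n_k$ be the number of samples in $P_k$, $m_k$ a positive integer spacing parameter, and $x^k_{(1)}\le\dots\le x^k_{(n_k)}$, $y^k_{(1)}\le\dots\le y^k_{(n_k)}$ the order statistics of the $x$- and $y$-coordinates of the samples in $P_k$, with the convention $x^k_{(i)}=x^k_{(1)}$ for $i<1$, $x^k_{(i)}=x^k_{(n_k)}$ for $i>n_k$ (same for $y$). Set $\xi_i^k=\frac{1}{2m_k}\sum_{r=i-m_k}^{i+m_k-1}x^k_{(r)}$, $\eta_j^k=\frac{1}{2m_k}\sum_{r=j-m_k}^{j+m_k-1}y^k_{(r)}$ for $1\le i,j\le n_k$, and boundary points $\xi_0^k=x^k_{(1)}$, $\xi^k_{n_k+1}=x^k_{(n_k)}$, $\eta_0^k=y^k_{(1)}$, $\eta^k_{n_k+1}=y^k_{(n_k)}$.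 For $(x,y)\in(\xi_i^k,\xi_{i+1}^k]\times(\eta_j^k,\eta_{j+1}^k]$ ($0\le i,j\le n_k$), $$\hat f_{n,\ell}(x,y)=\frac{n_k}{n}\cdot\frac{4m_k^2}{n_k^2\,(x^k_{(i+m_k)}-x^k_{(i-m_k)})(y^k_{(j+m_k)}-y^k_{(j-m_k)})},$$ and $\hat f_{n,\ell}=0$ outside all such cells. *)

theory Defs
  imports "HOL-Probability.Probability" "HOL-Library.Landau_Symbols"
begin

definition xmin :: "(nat \<Rightarrow> real \<times> real) \<Rightarrow> nat \<Rightarrow> real" where
  "xmin s n = Min ((\<lambda>v. fst (s v)) ` {..<n})"
definition xmax :: "(nat \<Rightarrow> real \<times> real) \<Rightarrow> nat \<Rightarrow> real" where
  "xmax s n = Max ((\<lambda>v. fst (s v)) ` {..<n})"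
definition ymin :: "(nat \<Rightarrow> real \<times> real) \<Rightarrow> nat \<Rightarrow> real" where
  "ymin s n = Min ((\<lambda>v. snd (s v)) ` {..<n})"
definition ymax :: "(nat \<Rightarrow> real \<times> real) \<Rightarrow> nat \<Rightarrow> real" where
  "ymax s n = Max ((\<lambda>v. snd (s v)) ` {..<n})"

text \<open>Index (0-based) of the equal-width interval of [lo,hi] split into l pieces that
  contains t; intervals are half-open [a,b) except the last one, which is closed.\<close>
definition cell_index :: "real \<Rightarrow> real \<Rightarrow> nat \<Rightarrow> real \<Rightarrow> nat" where
  "cell_index lo hi l t =
     (if hi \<le> lo then 0 else min (l - 1) (nat \<lfloor>(t - lo) / (hi - lo) * real l\<rfloor>))"

definition rect_members :: "nat \<Rightarrow> (nat \<Rightarrow> real \<times> real) \<Rightarrow> nat \<Rightarrow> nat \<times> nat \<Rightarrow> nat set" where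
  "rect_members l s n k =
     {v. v < n \<and> cell_index (xmin s n) (xmax s n) l (fst (s v)) = fst k
               \<and> cell_index (ymin s n) (ymax s n) l (snd (s v)) = snd k}"

text \<open>Order statistic x_(r) (1-based) of a sorted list, with the clamping convention
  x_(r) = x_(1) for r < 1 and x_(r) = x_(len) for r > len.\<close>
definition ord_stat :: "real list \<Rightarrow> int \<Rightarrow> real" where
  "ord_stat xs r = xs ! (nat (max 1 (min (int (length xs)) r)) - 1)"

definition ss_point :: "real list \<Rightarrow> nat \<Rightarrow> int \<Rightarrow> real" where
  "ss_point xs m i =
     (if i = 0 then ord_stat xs 1
      else if i = int (length xs) + 1 then ord_stat xs (int (length xs))
      else (\<Sum>r\<in>{i - int m .. i + int m - 1}. ord_stat xs r) / (2 * real m))"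

definition part_est :: "nat \<Rightarrow> (nat \<Rightarrow> real \<times> real) \<Rightarrow> nat \<Rightarrow> real \<times> real \<Rightarrow> real" where
  "part_est l s n z =
    (\<Sum>k\<in>{..<l} \<times> {..<l}.
      let I = rect_members l s n k;
          nk = card I;
          m = nat \<lfloor>sqrt (real nk) + 1/2\<rfloor>;
          xs = sort (map (\<lambda>v. fst (s v)) (sorted_list_of_set I));
          ys = sort (map (\<lambda>v. snd (s v)) (sorted_list_of_set I))
      in \<Sum>i\<in>{0 .. int nk}. \<Sum>j\<in>{0 .. int nk}.
           (if ss_point xs m i < fst z \<and> fst z \<le> ss_point xs m (i + 1)
               \<and> ss_point ys m j < snd z \<and> snd z \<le> ss_point ys m (j + 1)
            then (real nk / real n) * (4 * (real m)^2) /
                 ((real nk)^2 * (ord_stat xs (i + int m) - ord_stat xs (i - int m))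
                              * (ord_stat ys (j + int m) - ord_stat ys (j - int m)))
            else 0))"

end

theory Submission
  imports Defs
begin


lemma os_idx: "xs \<noteq> [] \<Longrightarrow> nat (max 1 (min (int (length xs)) r)) - 1 < length xs"
proof -
  assume "xs \<noteq> []"
  then have "1 \<le> int (length xs)" by (cases xs) auto
  then have "max 1 (min (int (length xs)) r) \<le> int (length xs)" by linarith
  then show ?thesis by linarith
qed

lemma os_mono:
  assumes "sorted xs" "xs \<noteq> []" "r \<le> r'"
  shows "ord_stat xs r \<le> ord_stat xs r'"
proof -
  have "max 1 (min (int (length xs)) r) \<le> max 1 (min (int (length xs)) r')" using assms(3) by linarith
  then have "nat (max 1 (min (int (length xs)) r)) - 1 \<le> nat (max 1 (min (int (length xs)) r')) - 1"
    by linarith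
  then show ?thesis unfolding ord_stat_def
    by (rule sorted_nth_mono[OF assms(1)]) (rule os_idx[OF assms(2)])
qed

lemma os_strict:
  assumes "sorted xs" "distinct xs" "1 \<le> r" "r < r'" "r' \<le> int (length xs)"
  shows "ord_stat xs r < ord_stat xs r'"
proof -
  have sw: "sorted_wrt (<) xs" using assms(1,2) by (simp add: strict_sorted_iff)
  have e1: "max 1 (min (int (length xs)) r) = r" using assms by linarith
  have e2: "max 1 (min (int (length xs)) r') = r'" using assms by linarith
  have "nat r - 1 < nat r' - 1" "nat r' - 1 < length xs" using assms by linarith+
  then show ?thesis unfolding ord_stat_def e1 e2
    by (rule sorted_wrt_nth_less[OF sw])
qed

lemma os_lo: "r \<le> 1 \<Longrightarrow> ord_stat xs r = ord_stat xs 1"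
proof -
  assume "r \<le> 1"
  then have "max 1 (min (int (length xs)) r) = max 1 (min (int (length xs)) 1)" by linarith
  then show ?thesis unfolding ord_stat_def by simp
qed

lemma os_hi: "int (length xs) \<le> r \<Longrightarrow> ord_stat xs r = ord_stat xs (int (length xs))"
proof -
  assume "int (length xs) \<le> r"
  then have "min (int (length xs)) r = min (int (length xs)) (int (length xs))" by linarith
  then show ?thesis unfolding ord_stat_def by simp
qed

lemma os_ge1: "sorted xs \<Longrightarrow> xs \<noteq> [] \<Longrightarrow> ord_stat xs 1 \<le> ord_stat xs r"
proof (cases "r \<le> 1")
  case True then show ?thesis by (simp add: os_lo[OF True])
next
  case False
  assume "sorted xs" "xs \<noteq> []"
  then show ?thesis by (rule os_mono) (use False in linarith)
qed

lemma os_leL: "sorted xs \<Longrightarrow> xs \<noteq> [] \<Longrightarrow> ord_stat xs r \<le> ord_stat xs (int (length xs))"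
proof (cases "int (length xs) \<le> r")
  case True then show ?thesis by (simp add: os_hi[OF True])
next
  case False
  assume "sorted xs" "xs \<noteq> []"
  then show ?thesis by (rule os_mono) (use False in linarith)
qed
lemma sum_shift: "(\<Sum>r\<in>{a..a + int N - 1}. h r) = (\<Sum>k<N. h (a + int k))"
proof (induction N)
  case 0 then show ?case by simp
next
  case (Suc N)
  have "{a..a + int (Suc N) - 1} = insert (a + int N) {a..a + int N - 1}" by auto
  then show ?case using Suc by (simp add: add.commute)
qed

lemma ss_avg:
  assumes "1 \<le> i" "i \<le> int (length xs)"
  shows "ss_point xs m i = (\<Sum>k<2*m. ord_stat xs (i - int m + int k)) / (2 * real m)"
proof -
  have e: "i + int m - 1 = (i - int m) + int (2*m) - 1" by simp
  have "(\<Sum>r\<in>{i - int m .. i + int m - 1}. ord_stat xs r) = (\<Sum>k<2*m. ord_stat xs (i - int m + int k))"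
    unfolding e by (rule sum_shift)
  then show ?thesis using assms unfolding ss_point_def by simp
qed

lemma ss_diff:
  assumes "1 \<le> i" "i + 1 \<le> int (length xs)" "m \<ge> 1"
  shows "ss_point xs m (i+1) - ss_point xs m i = (ord_stat xs (i + int m) - ord_stat xs (i - int m)) / (2 * real m)"
proof -
  let ?g = "\<lambda>k. ord_stat xs (i - int m + int k)"
  have "(\<Sum>k<2*m. ord_stat xs (i + 1 - int m + int k)) = (\<Sum>k<2*m. ?g (Suc k))"
    by (rule sum.cong) (auto simp: algebra_simps)
  moreover have "(\<Sum>k<2*m. ?g (Suc k) - ?g k) = ?g (2*m) - ?g 0"
    by (rule sum_lessThan_telescope)
  ultimately have "(\<Sum>k<2*m. ord_stat xs (i + 1 - int m + int k)) - (\<Sum>k<2*m. ?g k) = ?g (2*m) - ?g 0"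
    by (simp only: sum_subtractf)
  moreover have "?g (2*m) = ord_stat xs (i + int m)" by (simp add: algebra_simps)
  moreover have "?g 0 = ord_stat xs (i - int m)" by simp
  ultimately have D: "(\<Sum>k<2*m. ord_stat xs (i + 1 - int m + int k)) - (\<Sum>k<2*m. ?g k) = ord_stat xs (i + int m) - ord_stat xs (i - int m)"
    by simp
  have A1: "ss_point xs m (i+1) = (\<Sum>k<2*m. ord_stat xs (i + 1 - int m + int k)) / (2 * real m)"
    by (rule ss_avg) (use assms in auto)
  have A0: "ss_point xs m i = (\<Sum>k<2*m. ?g k) / (2 * real m)"
    by (rule ss_avg) (use assms in auto)
  show ?thesis unfolding A1 A0 D[symmetric] by (rule diff_divide_distrib[symmetric])
qed

lemma avg_bounds:
  assumes "\<And>k. k < N \<Longrightarrow> lo \<le> h k \<and> h k \<le> hi" "N > 0"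
  shows "lo \<le> (\<Sum>k<N. h k) / real N \<and> (\<Sum>k<N. h k) / real N \<le> (hi::real)"
proof -
  have "real N * lo \<le> (\<Sum>k<N. h k)" using sum_bounded_below[of "{..<N}" lo h] assms by auto
  moreover have "(\<Sum>k<N. h k) \<le> real N * hi" using sum_bounded_above[of "{..<N}" h hi] assms by auto
  moreover have "0 < real N" using assms(2) by simp
  ultimately show ?thesis by (simp add: pos_le_divide_eq pos_divide_le_eq mult.commute)
qed

lemma ss_0: "ss_point xs m 0 = ord_stat xs 1"
  unfolding ss_point_def by simp

lemma ss_last: "ss_point xs m (int (length xs) + 1) = ord_stat xs (int (length xs))"
  unfolding ss_point_def by simp

lemma ss_lower:
  assumes "sorted xs" "xs \<noteq> []" "m \<ge> 1" "0 \<le> i" "i \<le> int (length xs)"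
  shows "ord_stat xs (i - int m) \<le> ss_point xs m i"
proof (cases "i = 0")
  case True then show ?thesis using os_lo[of "0 - int m" xs] by (simp add: ss_0)
next
  case False
  have p: "ord_stat xs (i - int m) \<le> ord_stat xs (i - int m + int k) \<and>
           ord_stat xs (i - int m + int k) \<le> ord_stat xs (i - int m + int (2*m))" if "k < 2*m" for k
    using that by (intro conjI os_mono[OF assms(1,2)]) simp_all
  have N: "0 < 2*m" using assms(3) by simp
  have "ord_stat xs (i - int m) \<le> (\<Sum>k<2*m. ord_stat xs (i - int m + int k)) / real (2*m)"
    using avg_bounds[of "2*m" "ord_stat xs (i - int m)" "\<lambda>k. ord_stat xs (i - int m + int k)", OF p N] by blast
  moreover have "ss_point xs m i = (\<Sum>k<2*m. ord_stat xs (i - int m + int k)) / (2 * real m)"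
    by (rule ss_avg) (use assms False in auto)
  ultimately show ?thesis by simp
qed

lemma ss_upper:
  assumes "sorted xs" "xs \<noteq> []" "m \<ge> 1" "1 \<le> i" "i \<le> int (length xs) + 1"
  shows "ss_point xs m i \<le> ord_stat xs (i - 1 + int m)"
proof (cases "i = int (length xs) + 1")
  case True
  have "ss_point xs m i = ord_stat xs (int (length xs))" unfolding True by (rule ss_last)
  also have "\<dots> = ord_stat xs (i - 1 + int m)" by (rule os_hi[symmetric]) (use True assms in linarith)
  finally show ?thesis by simp
next
  case False
  have p: "ord_stat xs (i - int m) \<le> ord_stat xs (i - int m + int k) \<and>
           ord_stat xs (i - int m + int k) \<le> ord_stat xs (i - 1 + int m)" if "k < 2*m" for k
    using that by (intro conjI os_mono[OF assms(1,2)]) simp_all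
  have N: "0 < 2*m" using assms(3) by simp
  have "(\<Sum>k<2*m. ord_stat xs (i - int m + int k)) / real (2*m) \<le> ord_stat xs (i - 1 + int m)"
    using avg_bounds[of "2*m" "ord_stat xs (i - int m)" "\<lambda>k. ord_stat xs (i - int m + int k)", OF p N] by blast
  moreover have "ss_point xs m i = (\<Sum>k<2*m. ord_stat xs (i - int m + int k)) / (2 * real m)"
    by (rule ss_avg) (use assms False in auto)
  ultimately show ?thesis by simp
qed

lemma ss_mono:
  assumes "sorted xs" "xs \<noteq> []" "m \<ge> 1" "0 \<le> i" "i \<le> int (length xs)"
  shows "ss_point xs m i \<le> ss_point xs m (i+1)"
proof -
  have L1: "1 \<le> int (length xs)" using assms(2) by (cases xs) auto
  consider "i = 0" | "i = int (length xs)" | "1 \<le> i" "i + 1 \<le> int (length xs)" using assms by linarith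
  then show ?thesis
  proof cases
    case 1
    have a: "ord_stat xs (1 - int m) \<le> ss_point xs m 1"
      by (rule ss_lower[OF assms(1-3)]) (use L1 in auto)
    have b: "ord_stat xs (1 - int m) = ord_stat xs 1" by (rule os_lo) (use assms(3) in simp)
    have c: "ss_point xs m 0 = ord_stat xs 1" by (rule ss_0)
    show ?thesis using a b c 1 by simp
  next
    case 2
    have a: "ss_point xs m i \<le> ord_stat xs (i - 1 + int m)"
      by (rule ss_upper[OF assms(1-3)]) (use L1 2 in auto)
    have b: "ord_stat xs (i - 1 + int m) = ord_stat xs (int (length xs))"
      by (rule os_hi) (use 2 assms(3) in simp)
    have c: "ss_point xs m (i+1) = ord_stat xs (int (length xs))" unfolding 2 by (rule ss_last)
    show ?thesis using a b c by simp
  next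
    case 3
    have "ord_stat xs (i - int m) \<le> ord_stat xs (i + int m)" by (rule os_mono[OF assms(1,2)]) simp
    then have "0 \<le> (ord_stat xs (i + int m) - ord_stat xs (i - int m)) / (2 * real m)" by simp
    then show ?thesis using ss_diff[OF 3 assms(3)] by linarith
  qed
qed



definition tt :: "real list \<Rightarrow> nat \<Rightarrow> int \<Rightarrow> real" where
  "tt xs m i = 2 * real m * (ss_point xs m (i+1) - ss_point xs m i) / (ord_stat xs (i + int m) - ord_stat xs (i - int m))"

definition TT :: "real list \<Rightarrow> nat \<Rightarrow> real" where
  "TT xs m = (\<Sum>i\<in>{0..int (length xs)}. tt xs m i)"

lemma tt_bounds:
  assumes "sorted xs" "xs \<noteq> []" "m \<ge> 1" "0 \<le> i" "i \<le> int (length xs)"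
  shows "0 \<le> tt xs m i \<and> tt xs m i \<le> 2 * real m"
proof -
  define D where "D = ord_stat xs (i + int m) - ord_stat xs (i - int m)"
  define \<Delta> where "\<Delta> = ss_point xs m (i+1) - ss_point xs m i"
  have d0: "0 \<le> \<Delta>" unfolding \<Delta>_def using ss_mono[OF assms] by simp
  have u: "ss_point xs m (i+1) \<le> ord_stat xs (i + 1 - 1 + int m)"
    by (rule ss_upper[OF assms(1-3)]) (use assms in auto)
  have l: "ord_stat xs (i - int m) \<le> ss_point xs m i" by (rule ss_lower[OF assms])
  have dD: "\<Delta> \<le> D" unfolding \<Delta>_def D_def using u l by simp
  have t: "tt xs m i = 2 * real m * \<Delta> / D" unfolding tt_def \<Delta>_def D_def by simp
  show ?thesis
  proof (cases "D = 0")
    case True then show ?thesis using t assms by simp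
  next
    case False
    then have Dp: "D > 0" using d0 dD by linarith
    have "2 * real m * \<Delta> / D \<le> 2 * real m"
      using Dp dD assms(3) by (simp add: divide_le_eq mult_left_mono)
    moreover have "0 \<le> 2 * real m * \<Delta> / D" using Dp d0 by simp
    ultimately show ?thesis using t by simp
  qed
qed

lemma tt_one:
  assumes "sorted xs" "distinct xs" "m \<ge> 1" "1 \<le> i" "i + 1 \<le> int (length xs)"
  shows "tt xs m i = 1"
proof -
  have ne: "xs \<noteq> []" using assms by auto
  have a: "ord_stat xs (i - int m) \<le> ord_stat xs i" by (rule os_mono[OF assms(1) ne]) simp
  have b: "ord_stat xs i < ord_stat xs (i+1)" by (rule os_strict[OF assms(1,2)]) (use assms in auto)
  have c: "ord_stat xs (i+1) \<le> ord_stat xs (i + int m)" by (rule os_mono[OF assms(1) ne]) (use assms in simp)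
  have Dp: "ord_stat xs (i + int m) - ord_stat xs (i - int m) > 0" using a b c by linarith
  have "ss_point xs m (i+1) - ss_point xs m i = (ord_stat xs (i + int m) - ord_stat xs (i - int m)) / (2 * real m)"
    by (rule ss_diff) (use assms in auto)
  then show ?thesis unfolding tt_def using Dp assms(3) by simp
qed

lemma TT_bounds:
  assumes "sorted xs" "distinct xs" "m \<ge> 1" "xs \<noteq> []"
  shows "real (length xs) - 1 \<le> TT xs m \<and> TT xs m \<le> real (length xs) - 1 + 4 * real m"
proof -
  define L where "L = int (length xs)"
  have L1: "1 \<le> L" using assms(4) unfolding L_def by (cases xs) auto
  have split: "{0..L} = insert 0 (insert L {1..L-1})" using L1 by auto
  have fin: "finite {1..L-1}" by simp
  have S: "TT xs m = tt xs m 0 + (tt xs m L + (\<Sum>i\<in>{1..L-1}. tt xs m i))"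
    unfolding TT_def L_def[symmetric] split using L1 by (simp add: sum.insert)
  have mid: "(\<Sum>i\<in>{1..L-1}. tt xs m i) = (\<Sum>i\<in>{1..L-1}. 1)"
    by (rule sum.cong) (use assms in \<open>auto intro!: tt_one simp: L_def\<close>)
  have c: "(\<Sum>i\<in>{1..L-1}. (1::real)) = real (length xs) - 1"
    using L1 by (simp add: L_def)
  have b0: "0 \<le> tt xs m 0 \<and> tt xs m 0 \<le> 2 * real m" by (rule tt_bounds) (use assms in auto)
  have bL: "0 \<le> tt xs m L \<and> tt xs m L \<le> 2 * real m" by (rule tt_bounds) (use assms L1 in \<open>auto simp: L_def\<close>)
  show ?thesis using S mid c b0 bL by linarith
qed

lemma term_eq:
  fixes a b c d Dx Dy :: real
  shows "(a / b) * (4 * (real m)^2) / (a^2 * Dx * Dy) * ((p2 - p1) * (q2 - q1))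
       = (a / b) / a^2 * (2 * real m * (p2 - p1) / Dx) * (2 * real m * (q2 - q1) / Dy)"
  by (simp add: divide_inverse inverse_mult_distrib power2_eq_square algebra_simps)

lemma sum_prod3: "(K::real) * sum f A * sum g B = (\<Sum>i\<in>A. \<Sum>j\<in>B. K * f i * g j)"
proof -
  have "K * sum f A * sum g B = (\<Sum>i\<in>A. K * f i) * sum g B" by (simp add: sum_distrib_left)
  also have "\<dots> = (\<Sum>i\<in>A. \<Sum>j\<in>B. K * f i * g j)" by (rule sum_product)
  finally show ?thesis .
qed

lemma rect_value:
  assumes "sorted xs" "sorted ys" "length xs = L" "length ys = L" "L \<ge> 1" "m \<ge> 1"
  shows "(\<Sum>i\<in>{0 .. int L}. \<Sum>j\<in>{0 .. int L}.
           (real L / real n) * (4 * (real m)^2) /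
                 ((real L)^2 * (ord_stat xs (i + int m) - ord_stat xs (i - int m))
                              * (ord_stat ys (j + int m) - ord_stat ys (j - int m)))
           * (measure lborel {ss_point xs m i <.. ss_point xs m (i + 1)}
              * measure lborel {ss_point ys m j <.. ss_point ys m (j + 1)}))
        = (real L / real n) / (real L)^2 * TT xs m * TT ys m"
proof -
  have nx: "xs \<noteq> []" "ys \<noteq> []" using assms by auto
  have "(\<Sum>i\<in>{0 .. int L}. \<Sum>j\<in>{0 .. int L}.
           (real L / real n) * (4 * (real m)^2) /
                 ((real L)^2 * (ord_stat xs (i + int m) - ord_stat xs (i - int m))
                              * (ord_stat ys (j + int m) - ord_stat ys (j - int m)))
           * (measure lborel {ss_point xs m i <.. ss_point xs m (i + 1)}
              * measure lborel {ss_point ys m j <.. ss_point ys m (j + 1)}))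
      = (\<Sum>i\<in>{0 .. int L}. \<Sum>j\<in>{0 .. int L}. (real L / real n) / (real L)^2 * tt xs m i * tt ys m j)"
  proof (intro sum.cong refl)
    fix i j assume i: "i \<in> {0..int L}" and j: "j \<in> {0..int L}"
    have mx: "ss_point xs m i \<le> ss_point xs m (i+1)" by (rule ss_mono) (use assms nx i in auto)
    have my: "ss_point ys m j \<le> ss_point ys m (j+1)" by (rule ss_mono) (use assms nx j in auto)
    show "(real L / real n) * (4 * (real m)^2) /
                 ((real L)^2 * (ord_stat xs (i + int m) - ord_stat xs (i - int m))
                              * (ord_stat ys (j + int m) - ord_stat ys (j - int m)))
           * (measure lborel {ss_point xs m i <.. ss_point xs m (i + 1)}
              * measure lborel {ss_point ys m j <.. ss_point ys m (j + 1)})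
          = (real L / real n) / (real L)^2 * tt xs m i * tt ys m j"
      unfolding measure_lborel_Ioc[OF mx] measure_lborel_Ioc[OF my] tt_def by (rule term_eq)
  qed
  also have "\<dots> = (real L / real n) / (real L)^2 * TT xs m * TT ys m"
    unfolding TT_def assms(3,4) by (rule sum_prod3[symmetric])
  finally show ?thesis .
qed



lemma ratio_bound:
  fixes T :: real
  assumes L: "L \<ge> 1" and lo: "real L - 1 \<le> T" and hi: "T \<le> real L - 1 + 4 * real m"
    and m: "real m \<le> sqrt (real L) + 1/2"
  shows "\<bar>T / real L - 1\<bar> \<le> 5 / sqrt (real L)"
proof -
  define q where "q = sqrt (real L)"
  have q1: "q \<ge> 1" unfolding q_def using L by simp
  have Lq: "real L = q * q" unfolding q_def by simp
  have "\<bar>T - real L\<bar> \<le> 5 * q" using lo hi m q1 unfolding q_def[symmetric] by linarith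
  moreover have "T / real L - 1 = (T - real L) / (q * q)" using Lq q1 by (simp add: field_simps)
  moreover have "\<bar>T - real L\<bar> / (q * q) \<le> 5 * q / (q * q)"
    by (rule divide_right_mono) (use calculation(1) q1 in auto)
  ultimately have "\<bar>T / real L - 1\<bar> \<le> 5 * q / (q * q)"
    by (simp add: abs_div)
  also have "\<dots> = 5 / q" using q1 by simp
  finally show ?thesis unfolding q_def .
qed

lemma prod_bound:
  fixes a b e :: real
  assumes "\<bar>a - 1\<bar> \<le> e" "\<bar>b - 1\<bar> \<le> e" "e \<le> 1"
  shows "\<bar>a * b - 1\<bar> \<le> 3 * e"
proof -
  have "a * b - 1 = (a - 1) * (b - 1) + (a - 1) + (b - 1)" by algebra
  moreover have "\<bar>(a - 1) * (b - 1)\<bar> \<le> e * e"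
    unfolding abs_mult by (rule mult_mono) (use assms in auto)
  moreover have "e * e \<le> e * 1"
    by (rule mult_left_mono) (use assms in auto)
  ultimately show ?thesis using assms by linarith
qed

lemma weighted_bound:
  fixes w p :: "'k \<Rightarrow> real"
  assumes "finite K" "sum w K = 1" "\<And>k. k \<in> K \<Longrightarrow> 0 \<le> w k" "\<And>k. k \<in> K \<Longrightarrow> \<bar>p k - 1\<bar> \<le> E"
  shows "\<bar>(\<Sum>k\<in>K. w k * p k) - 1\<bar> \<le> E"
proof -
  have "(\<Sum>k\<in>K. w k * p k) - 1 = (\<Sum>k\<in>K. w k * (p k - 1))"
    using assms(2) by (simp add: right_diff_distrib sum_subtractf)
  also have "\<bar>\<dots>\<bar> \<le> (\<Sum>k\<in>K. \<bar>w k * (p k - 1)\<bar>)" by (rule sum_abs)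
  also have "\<dots> \<le> (\<Sum>k\<in>K. w k * E)"
    by (rule sum_mono) (use assms in \<open>auto simp: abs_mult intro: mult_left_mono\<close>)
  also have "\<dots> = E" using assms(2) by (simp add: sum_distrib_right[symmetric])
  finally show ?thesis .
qed

lemma cell_index_less: "l \<ge> 1 \<Longrightarrow> cell_index lo hi l t < l"
  unfolding cell_index_def by auto

lemma sum_card_rect:
  assumes "l \<ge> 1"
  shows "(\<Sum>k\<in>{..<l}\<times>{..<l}. card (rect_members l s n k)) = n"
proof -
  have fin: "finite (rect_members l s n k)" for k unfolding rect_members_def by simp
  have disj: "rect_members l s n k \<inter> rect_members l s n k' = {}" if "k \<noteq> k'" for k k'
  proof -
    have "v \<notin> rect_members l s n k \<inter> rect_members l s n k'" for v
    proof
      assume "v \<in> rect_members l s n k \<inter> rect_members l s n k'"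
      then have "fst k = fst k'" "snd k = snd k'" unfolding rect_members_def by auto
      then show False using that by (simp add: prod_eq_iff)
    qed
    then show ?thesis by blast
  qed
  have "card (\<Union>k\<in>{..<l}\<times>{..<l}. rect_members l s n k) = (\<Sum>k\<in>{..<l}\<times>{..<l}. card (rect_members l s n k))"
    by (rule card_UN_disjoint) (use fin disj in auto)
  moreover have "(\<Union>k\<in>{..<l}\<times>{..<l}. rect_members l s n k) = {..<n}"
  proof
    show "(\<Union>k\<in>{..<l}\<times>{..<l}. rect_members l s n k) \<subseteq> {..<n}" unfolding rect_members_def by auto
    show "{..<n} \<subseteq> (\<Union>k\<in>{..<l}\<times>{..<l}. rect_members l s n k)"
    proof
      fix v assume v: "v \<in> {..<n}"
      let ?k = "(cell_index (xmin s n) (xmax s n) l (fst (s v)), cell_index (ymin s n) (ymax s n) l (snd (s v)))"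
      have "?k \<in> {..<l}\<times>{..<l}" using cell_index_less[OF assms] by simp
      moreover have "v \<in> rect_members l s n ?k" using v unfolding rect_members_def by simp
      ultimately show "v \<in> (\<Union>k\<in>{..<l}\<times>{..<l}. rect_members l s n k)" by blast
    qed
  qed
  ultimately show ?thesis by simp
qed





lemma box_eq: "(if a1 < fst z \<and> fst z \<le> a2 \<and> b1 < snd z \<and> snd z \<le> b2 then c else 0)
   = (c::real) * indicator ({a1<..a2} \<times> {b1<..b2}) (z::real\<times>real)"
  by (cases z) (auto simp: indicator_def)

lemma box_meas: "emeasure (lborel::(real\<times>real) measure) ({a1<..a2} \<times> {b1<..b2}) < \<infinity>"
  by (rule emeasure_bounded_finite) (auto intro!: bounded_Times)

lemma box_measure: "measure (lborel::(real\<times>real) measure) ({a1<..a2} \<times> {b1<..b2})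
   = measure lborel {a1<..a2} * measure lborel {b1<..b2}"
proof -
  have "emeasure (lborel::(real\<times>real) measure) ({a1<..a2} \<times> {b1<..b2})
     = emeasure (lborel \<Otimes>\<^sub>M lborel) ({a1<..a2} \<times> {b1<..b2})" by (simp add: lborel_prod)
  also have "\<dots> = emeasure lborel {a1<..a2} * emeasure lborel {b1<..b2}"
    by (rule lborel.emeasure_pair_measure_Times) auto
  finally show ?thesis unfolding measure_def by (simp add: enn2real_mult)
qed

lemma box_sets: "{a1<..a2::real} \<times> {b1<..b2::real} \<in> sets borel"
proof -
  have "{a1<..a2::real} \<times> {b1<..b2::real} \<in> sets (borel \<Otimes>\<^sub>M borel)" by (rule pair_measureI) auto
  then show ?thesis by (simp only: borel_prod)
qed

lemma box_integrable: fixes a1 a2 b1 b2 c :: real shows "integrable lborel (\<lambda>z::real\<times>real. if a1 < fst z \<and> fst z \<le> a2 \<and> b1 < snd z \<and> snd z \<le> b2 then c else 0)"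
  unfolding box_eq[of a1] by (intro integrable_mult_right integrable_real_indicator box_meas) (auto simp: box_sets)

lemma box_integral: fixes a1 a2 b1 b2 c :: real shows "(LINT z|lborel. (if a1 < fst z \<and> fst z \<le> a2 \<and> b1 < snd z \<and> snd z \<le> b2 then c else 0))
   = c * (measure lborel {a1<..a2} * measure lborel {b1<..b2})"
  unfolding box_eq[of a1] integral_mult_right_zero
  by (simp only: integral_indicator box_measure[symmetric]) simp

lemma triple_int:
  fixes A :: "'k set" and c :: "'k \<Rightarrow> 'i \<Rightarrow> 'j \<Rightarrow> real" and p1 p2 q1 q2 :: "_ \<Rightarrow> _ \<Rightarrow> real"
  shows "(LINT z|lborel. (\<Sum>a\<in>A. \<Sum>i\<in>B a. \<Sum>j\<in>C a. (if p1 a i < fst z \<and> fst z \<le> p2 a i \<and> q1 a j < snd z \<and> snd z \<le> q2 a j then c a i j else 0)))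
   = (\<Sum>a\<in>A. \<Sum>i\<in>B a. \<Sum>j\<in>C a. c a i j * (measure lborel {p1 a i<..p2 a i} * measure lborel {q1 a j<..q2 a j}))"
  apply (rule trans[OF Bochner_Integration.integral_sum])
  apply (rule Bochner_Integration.integrable_sum, rule Bochner_Integration.integrable_sum, rule box_integrable)
  apply (rule sum.cong[OF refl])
  apply (rule trans[OF Bochner_Integration.integral_sum], rule Bochner_Integration.integrable_sum, rule box_integrable)
  apply (rule sum.cong[OF refl])
  apply (rule trans[OF Bochner_Integration.integral_sum], rule box_integrable)
  apply (rule sum.cong[OF refl])
  apply (rule box_integral)
  done

lemma part_est_integral:
  "(LINT z|lborel. part_est l s n z) =
    (\<Sum>k\<in>{..<l} \<times> {..<l}.
      let I = rect_members l s n k;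
          nk = card I;
          m = nat \<lfloor>sqrt (real nk) + 1/2\<rfloor>;
          xs = sort (map (\<lambda>v. fst (s v)) (sorted_list_of_set I));
          ys = sort (map (\<lambda>v. snd (s v)) (sorted_list_of_set I))
      in \<Sum>i\<in>{0 .. int nk}. \<Sum>j\<in>{0 .. int nk}.
           (real nk / real n) * (4 * (real m)^2) /
                 ((real nk)^2 * (ord_stat xs (i + int m) - ord_stat xs (i - int m))
                              * (ord_stat ys (j + int m) - ord_stat ys (j - int m)))
           * (measure lborel {ss_point xs m i <.. ss_point xs m (i + 1)}
              * measure lborel {ss_point ys m j <.. ss_point ys m (j + 1)}))"
  unfolding part_est_def Let_def by (rule triple_int)


lemma m_ge1: "nk \<ge> 1 \<Longrightarrow> nat \<lfloor>sqrt (real nk) + 1/2\<rfloor> \<ge> 1"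
proof -
  assume "nk \<ge> 1"
  then have "1 \<le> real nk" by simp
  then have "1 \<le> sqrt (real nk)" by (rule real_sqrt_ge_one)
  then have "1 \<le> sqrt (real nk) + 1/2" by linarith
  then have "1 \<le> \<lfloor>sqrt (real nk) + 1/2\<rfloor>" by (simp only: one_le_floor)
  then show ?thesis by linarith
qed

lemma m_le: "real (nat \<lfloor>sqrt (real nk) + 1/2\<rfloor>) \<le> sqrt (real nk) + 1/2"
proof -
  have "0 \<le> \<lfloor>sqrt (real nk) + 1/2\<rfloor>" by simp
  then have "real (nat \<lfloor>sqrt (real nk) + 1/2\<rfloor>) = real_of_int \<lfloor>sqrt (real nk) + 1/2\<rfloor>" by simp
  also have "\<dots> \<le> sqrt (real nk) + 1/2" by (rule of_int_floor_le)
  finally show ?thesis .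
qed

lemma list_props:
  assumes "inj (f :: nat \<Rightarrow> real)" "finite I"
  shows "sorted (sort (map f (sorted_list_of_set I)))"
    and "distinct (sort (map f (sorted_list_of_set I)))"
    and "length (sort (map f (sorted_list_of_set I))) = card I"
proof -
  show "sorted (sort (map f (sorted_list_of_set I)))" by simp
  have "inj_on f (set (sorted_list_of_set I))" using assms(1) by (rule inj_on_subset) simp
  then show "distinct (sort (map f (sorted_list_of_set I)))" by (simp add: distinct_map)
  show "length (sort (map f (sorted_list_of_set I))) = card I" by simp
qed

lemma list_ratio:
  assumes "sorted xs" "distinct xs" "length xs = L" "L \<ge> N" "N \<ge> 1"
  shows "\<bar>TT xs (nat \<lfloor>sqrt (real L) + 1/2\<rfloor>) / real L - 1\<bar> \<le> 5 / sqrt (real N)"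
proof -
  have L1: "L \<ge> 1" using assms by simp
  have ne: "xs \<noteq> []" using assms L1 by auto
  have tb: "real (length xs) - 1 \<le> TT xs (nat \<lfloor>sqrt (real L) + 1/2\<rfloor>) \<and>
            TT xs (nat \<lfloor>sqrt (real L) + 1/2\<rfloor>) \<le> real (length xs) - 1 + 4 * real (nat \<lfloor>sqrt (real L) + 1/2\<rfloor>)"
    by (rule TT_bounds[OF assms(1,2) m_ge1[OF L1] ne])
  have "\<bar>TT xs (nat \<lfloor>sqrt (real L) + 1/2\<rfloor>) / real L - 1\<bar> \<le> 5 / sqrt (real L)"
    by (rule ratio_bound[OF L1 _ _ m_le]) (use tb assms(3) in auto)
  also have "\<dots> \<le> 5 / sqrt (real N)"
    by (rule divide_left_mono) (use assms in auto)
  finally show ?thesis .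
qed

lemma det_bound:
  assumes l1: "l \<ge> 1" and cardN: "\<And>k. k \<in> {..<l}\<times>{..<l} \<Longrightarrow> card (rect_members l s n k) \<ge> N"
    and N: "N \<ge> 25" and ix: "inj (\<lambda>v. fst (s v))" and iy: "inj (\<lambda>v. snd (s v))"
  shows "\<bar>(LINT z|lborel. part_est l s n z) - 1\<bar> \<le> 3 * (5 / sqrt (real N))"
proof -
  define K where "K = {..<l}\<times>{..<l}"
  define nk where "nk k = card (rect_members l s n k)" for k
  define m where "m k = nat \<lfloor>sqrt (real (nk k)) + 1/2\<rfloor>" for k
  define xs where "xs k = sort (map (\<lambda>v. fst (s v)) (sorted_list_of_set (rect_members l s n k)))" for k
  define ys where "ys k = sort (map (\<lambda>v. snd (s v)) (sorted_list_of_set (rect_members l s n k)))" for k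
  have fin: "finite (rect_members l s n k)" for k unfolding rect_members_def by simp
  have xsP: "sorted (xs k)" "distinct (xs k)" "length (xs k) = nk k" for k
    unfolding xs_def nk_def using list_props[OF ix fin] by auto
  have ysP: "sorted (ys k)" "distinct (ys k)" "length (ys k) = nk k" for k
    unfolding ys_def nk_def using list_props[OF iy fin] by auto
  have nkN: "k \<in> K \<Longrightarrow> nk k \<ge> N" for k using cardN unfolding K_def nk_def by auto
  have nk1: "k \<in> K \<Longrightarrow> nk k \<ge> 1" for k using nkN[of k] N by simp
  have sumnk: "(\<Sum>k\<in>K. nk k) = n" unfolding K_def nk_def by (rule sum_card_rect[OF l1])
  have "(0,0) \<in> K" unfolding K_def using l1 by simp
  then have "nk (0,0) \<le> (\<Sum>k\<in>K. nk k)" by (intro member_le_sum) (auto simp: K_def)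
  then have npos: "n > 0" using nk1[OF \<open>(0,0) \<in> K\<close>] sumnk by simp
  have I: "(LINT z|lborel. part_est l s n z) =
     (\<Sum>k\<in>K. (real (nk k) / real n) / (real (nk k))^2 * TT (xs k) (m k) * TT (ys k) (m k))"
    unfolding part_est_integral Let_def K_def[symmetric] nk_def[symmetric] m_def[symmetric]
      xs_def[symmetric] ys_def[symmetric]
  proof (rule sum.cong[OF refl])
    fix k assume k: "k \<in> K"
    have "(\<Sum>i\<in>{0 .. int (nk k)}. \<Sum>j\<in>{0 .. int (nk k)}.
           (real (nk k) / real n) * (4 * (real (m k))^2) /
                 ((real (nk k))^2 * (ord_stat (xs k) (i + int (m k)) - ord_stat (xs k) (i - int (m k)))
                              * (ord_stat (ys k) (j + int (m k)) - ord_stat (ys k) (j - int (m k))))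
           * (measure lborel {ss_point (xs k) (m k) i <.. ss_point (xs k) (m k) (i + 1)}
              * measure lborel {ss_point (ys k) (m k) j <.. ss_point (ys k) (m k) (j + 1)}))
        = (real (nk k) / real n) / (real (nk k))^2 * TT (xs k) (m k) * TT (ys k) (m k)"
      by (rule rect_value[OF xsP(1) ysP(1) xsP(3) ysP(3) nk1[OF k]]) (unfold m_def, rule m_ge1[OF nk1[OF k]])
    then show "(\<Sum>i\<in>{0 .. int (nk k)}. \<Sum>j\<in>{0 .. int (nk k)}.
           (real (nk k) / real n) * (4 * (real (m k))^2) /
                 ((real (nk k))^2 * (ord_stat (xs k) (i + int (m k)) - ord_stat (xs k) (i - int (m k)))
                              * (ord_stat (ys k) (j + int (m k)) - ord_stat (ys k) (j - int (m k))))
           * (measure lborel {ss_point (xs k) (m k) i <.. ss_point (xs k) (m k) (i + 1)}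
              * measure lborel {ss_point (ys k) (m k) j <.. ss_point (ys k) (m k) (j + 1)}))
        = (real (nk k) / real n) / (real (nk k))^2 * TT (xs k) (m k) * TT (ys k) (m k)" .
  qed
  define e where "e = 5 / sqrt (real N)"
  have e1: "e \<le> 1"
  proof -
    have "5 \<le> sqrt (real N)" by (rule real_le_rsqrt) (use N in simp)
    then have "0 < sqrt (real N)" "5 \<le> sqrt (real N)" by linarith+
    then show ?thesis unfolding e_def by (subst divide_le_eq_1_pos) auto
  qed
  have "\<bar>(\<Sum>k\<in>K. (real (nk k) / real n) * ((TT (xs k) (m k) / real (nk k)) * (TT (ys k) (m k) / real (nk k)))) - 1\<bar> \<le> 3 * e"
  proof (rule weighted_bound)
    show "finite K" unfolding K_def by simp
    show "(\<Sum>k\<in>K. real (nk k) / real n) = 1"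
      using npos by (simp add: sum_divide_distrib[symmetric] sumnk[symmetric] of_nat_sum[symmetric] del: of_nat_sum)
    show "0 \<le> real (nk k) / real n" for k by simp
    fix k assume k: "k \<in> K"
    have rx: "\<bar>TT (xs k) (m k) / real (nk k) - 1\<bar> \<le> e"
      unfolding e_def m_def by (rule list_ratio[OF xsP nkN[OF k]]) (use N in simp)
    have ry: "\<bar>TT (ys k) (m k) / real (nk k) - 1\<bar> \<le> e"
      unfolding e_def m_def by (rule list_ratio[OF ysP nkN[OF k]]) (use N in simp)
    show "\<bar>(TT (xs k) (m k) / real (nk k)) * (TT (ys k) (m k) / real (nk k)) - 1\<bar> \<le> 3 * e"
      by (rule prod_bound[OF rx ry e1])
  qed
  moreover have "(\<Sum>k\<in>K. (real (nk k) / real n) * ((TT (xs k) (m k) / real (nk k)) * (TT (ys k) (m k) / real (nk k))))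
      = (\<Sum>k\<in>K. (real (nk k) / real n) / (real (nk k))^2 * TT (xs k) (m k) * TT (ys k) (m k))"
    by (rule sum.cong[OF refl]) (simp add: power2_eq_square)
  ultimately show ?thesis using I unfolding e_def by simp
qed



lemma no_tie:
  fixes M :: "'a measure" and Z :: "nat \<Rightarrow> 'a \<Rightarrow> real \<times> real"
    and f :: "real \<times> real \<Rightarrow> real" and g :: "real \<times> real \<Rightarrow> real"
  assumes P: "prob_space M"
    and ind: "prob_space.indep_vars M (\<lambda>_. borel) Z UNIV"
    and D: "\<And>i. distributed M lborel (Z i) (\<lambda>z. ennreal (f z))"
    and ij: "i \<noteq> j"
    and g: "g \<in> borel_measurable borel"
    and null: "\<And>c. g -` {c} \<in> null_sets lborel"
  shows "AE \<omega> in M. g (Z i \<omega>) \<noteq> g (Z j \<omega>)"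
proof -
  interpret prob_space M by fact
  have rvZ: "Z k \<in> borel_measurable M" for k
    using distributed_measurable[OF D[of k]] by simp
  define X where "X = (\<lambda>\<omega>. g (Z i \<omega>))"
  define Y where "Y = (\<lambda>\<omega>. g (Z j \<omega>))"
  have rvX: "X \<in> borel_measurable M" unfolding X_def using rvZ g by measurable
  have rvY: "Y \<in> borel_measurable M" unfolding Y_def using rvZ g by measurable
  have iv: "indep_var borel X borel Y"
  proof -
    have m1: "(\<lambda>h. g (h i)) \<in> borel_measurable (PiM {i} (\<lambda>_. borel))"
      using g by measurable
    have m2: "(\<lambda>h. g (h j)) \<in> borel_measurable (PiM {j} (\<lambda>_. borel))"
      using g by measurable
    have "indep_var borel ((\<lambda>h. g (h i)) \<circ> (\<lambda>\<omega>. restrict (\<lambda>i. Z i \<omega>) {i}))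
                     borel ((\<lambda>h. g (h j)) \<circ> (\<lambda>\<omega>. restrict (\<lambda>i. Z i \<omega>) {j}))"
      by (rule indep_var_compose[OF indep_var_restrict[OF ind] m1 m2]) (use ij in auto)
    then show ?thesis by (simp add: X_def Y_def o_def)
  qed
  interpret DY: prob_space "distr M borel Y" by (rule prob_space_distr[OF rvY])
  have atom: "emeasure (distr M borel Y) {x} = 0" for x
  proof -
    have "emeasure (distr M borel Y) {x} = emeasure M (Y -` {x} \<inter> space M)"
      by (rule emeasure_distr[OF rvY]) simp
    also have "Y -` {x} \<inter> space M = Z j -` (g -` {x}) \<inter> space M" by (auto simp: Y_def)
    also have "emeasure M \<dots> = (\<integral>\<^sup>+z. ennreal (f z) * indicator (g -` {x}) z \<partial>lborel)"
      by (rule distributed_emeasure[OF D]) (use null[of x] in auto)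
    also have "\<dots> = 0"
      by (rule nn_integral_null_set[OF null])
    finally show ?thesis .
  qed
  define Dg where "Dg = {p::real\<times>real. fst p = snd p}"
  have Dgs: "Dg \<in> sets (borel \<Otimes>\<^sub>M borel)"
  proof -
    have "{p \<in> space (borel \<Otimes>\<^sub>M borel). fst p = (snd p :: real)} \<in> sets (borel \<Otimes>\<^sub>M borel)"
      by measurable
    then show ?thesis by (simp add: Dg_def space_pair_measure)
  qed
  have rvXY: "(\<lambda>\<omega>. (X \<omega>, Y \<omega>)) \<in> measurable M (borel \<Otimes>\<^sub>M borel)"
    using rvX rvY by measurable
  have "emeasure M {\<omega>\<in>space M. X \<omega> = Y \<omega>} = emeasure M ((\<lambda>\<omega>. (X \<omega>, Y \<omega>)) -` Dg \<inter> space M)"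
    by (rule arg_cong[where f="emeasure M"]) (auto simp: Dg_def)
  also have "\<dots> = emeasure (distr M (borel \<Otimes>\<^sub>M borel) (\<lambda>\<omega>. (X \<omega>, Y \<omega>))) Dg"
    by (rule emeasure_distr[symmetric, OF rvXY Dgs])
  also have "distr M (borel \<Otimes>\<^sub>M borel) (\<lambda>\<omega>. (X \<omega>, Y \<omega>)) = distr M borel X \<Otimes>\<^sub>M distr M borel Y"
    using iv unfolding indep_var_distribution_eq by simp
  also have "emeasure \<dots> Dg = (\<integral>\<^sup>+x. emeasure (distr M borel Y) (Pair x -` Dg) \<partial>distr M borel X)"
    by (rule DY.emeasure_pair_measure_alt) (use Dgs in simp)
  also have "\<dots> = (\<integral>\<^sup>+x. 0 \<partial>distr M borel X)"
  proof (rule nn_integral_cong)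
    fix x have "Pair x -` Dg = {x}" by (auto simp: Dg_def)
    then show "emeasure (distr M borel Y) (Pair x -` Dg) = 0" using atom by simp
  qed
  finally have e0: "emeasure M {\<omega>\<in>space M. X \<omega> = Y \<omega>} = 0" by simp
  have "{\<omega>\<in>space M. X \<omega> = Y \<omega>} \<in> sets M" using rvX rvY by measurable
  then have "{\<omega>\<in>space M. X \<omega> = Y \<omega>} \<in> null_sets M" using e0 by auto
  then show ?thesis by (rule AE_I') (auto simp: X_def Y_def)
qed


lemma det_limit:
  assumes ix: "inj (\<lambda>v. fst (s v))" and iy: "inj (\<lambda>v. snd (s v))"
    and hl: "filterlim l at_top sequentially"
    and hN: "filterlim (\<lambda>n. Min ((\<lambda>k. card (rect_members (l n) s n k)) ` ({..<l n} \<times> {..<l n}))) at_top sequentially"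
  shows "(\<lambda>n. LINT z|lborel. part_est (l n) s n z) \<longlonglongrightarrow> 1"
proof -
  define N where "N n = Min ((\<lambda>k. card (rect_members (l n) s n k)) ` ({..<l n} \<times> {..<l n}))" for n
  have hN': "filterlim N at_top sequentially" using hN unfolding N_def .
  have ev1: "eventually (\<lambda>n. 1 \<le> l n) sequentially" using hl unfolding filterlim_at_top by blast
  have ev2: "eventually (\<lambda>n. 25 \<le> N n) sequentially" using hN' unfolding filterlim_at_top by blast
  have bound: "eventually (\<lambda>n. norm ((LINT z|lborel. part_est (l n) s n z) - 1) \<le> 3 * (5 / sqrt (real (N n)))) sequentially"
    using ev1 ev2
  proof eventually_elim
    case (elim n)
    have "card (rect_members (l n) s n k) \<ge> N n" if "k \<in> {..<l n}\<times>{..<l n}" for k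
      unfolding N_def by (rule Min_le) (use that in auto)
    then show ?case using det_bound[OF elim(1) _ elim(2) ix iy] by simp
  qed
  have "filterlim (\<lambda>n. sqrt (real (N n))) at_top sequentially"
    by (rule filterlim_compose[OF sqrt_at_top filterlim_compose[OF filterlim_real_sequentially hN']])
  then have "(\<lambda>n. 5 / sqrt (real (N n))) \<longlonglongrightarrow> 0"
    by (intro tendsto_divide_0[OF tendsto_const] filterlim_at_top_imp_at_infinity)
  then have "(\<lambda>n. 3 * (5 / sqrt (real (N n)))) \<longlonglongrightarrow> 0"
    using tendsto_mult_right_zero by blast
  then have "(\<lambda>n. (LINT z|lborel. part_est (l n) s n z) - 1) \<longlonglongrightarrow> 0"
    by (rule Lim_null_comparison[OF bound])
  then show ?thesis by (rule LIM_zero_cancel)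
qed

lemma null_fst: "fst -` {c} \<in> null_sets (lborel :: (real \<times> real) measure)"
proof -
  have "{c} \<times> (UNIV::real set) \<in> null_sets (lborel \<Otimes>\<^sub>M lborel)"
    by (rule lborel.times_in_null_sets1) auto
  moreover have "fst -` {c} = {c} \<times> (UNIV::real set)" by auto
  ultimately show ?thesis by (simp add: lborel_prod)
qed

lemma null_snd: "snd -` {c} \<in> null_sets (lborel :: (real \<times> real) measure)"
proof -
  have "(UNIV::real set) \<times> {c} \<in> null_sets (lborel \<Otimes>\<^sub>M lborel)"
    by (rule lborel.times_in_null_sets2) auto
  moreover have "snd -` {c} = (UNIV::real set) \<times> {c}" by auto
  ultimately show ?thesis by (simp add: lborel_prod)
qed

theorem proposition3:
  fixes M :: "'a measure" and Z :: "nat \<Rightarrow> 'a \<Rightarrow> real \<times> real"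
    and f :: "real \<times> real \<Rightarrow> real" and l :: "nat \<Rightarrow> nat"
  assumes "prob_space M"
    and "prob_space.indep_vars M (\<lambda>_. borel) Z UNIV"
    and "\<And>i. distributed M lborel (Z i) (\<lambda>z. ennreal (f z))"
    and "\<And>z. 0 \<le> f z"
    and "continuous_on UNIV f"
    and "filterlim l at_top sequentially"
    and "(\<lambda>n. real (l n) ^ 2) \<in> o(\<lambda>n. real n)"
    and "AE \<omega> in M. filterlim
           (\<lambda>n. Min ((\<lambda>k. card (rect_members (l n) (\<lambda>v. Z v \<omega>) n k)) ` ({..<l n} \<times> {..<l n})))
           at_top sequentially"
  shows "AE \<omega> in M. (\<lambda>n. LINT z|lborel. part_est (l n) (\<lambda>v. Z v \<omega>) n z) \<longlonglongrightarrow> 1"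
proof -
  have pair: "AE \<omega> in M. i \<noteq> j \<longrightarrow> g (Z i \<omega>) \<noteq> g (Z j \<omega>)"
    if g: "g \<in> borel_measurable borel" and nl: "\<And>c. g -` {c} \<in> null_sets lborel" for g :: "real \<times> real \<Rightarrow> real" and i j
  proof (cases "i = j")
    case True then show ?thesis by simp
  next
    case False
    show ?thesis using no_tie[OF assms(1,2,3) False g nl] by (rule AE_mp) simp
  qed
  have AEx: "AE \<omega> in M. \<forall>i j. i \<noteq> j \<longrightarrow> fst (Z i \<omega>) \<noteq> fst (Z j \<omega>)"
    unfolding AE_all_countable
    by (intro allI pair null_fst borel_measurable_continuous_onI continuous_on_fst continuous_on_id)
  have AEy: "AE \<omega> in M. \<forall>i j. i \<noteq> j \<longrightarrow> snd (Z i \<omega>) \<noteq> snd (Z j \<omega>)"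
    unfolding AE_all_countable
    by (intro allI pair null_snd borel_measurable_continuous_onI continuous_on_snd continuous_on_id)
  show ?thesis using AEx AEy assms(8)
  proof eventually_elim
    case (elim \<omega>)
    have ix: "inj (\<lambda>v. fst (Z v \<omega>))" using elim(1) by (auto intro: injI)
    have iy: "inj (\<lambda>v. snd (Z v \<omega>))" using elim(2) by (auto intro: injI)
    show ?case by (rule det_limit[OF ix iy assms(6) elim(3)])
  qed
qed


end
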